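(* Let $(C,\underline w)$ be a polarized nodal curve, let $(r,d,k)$ be a type with $k<r$, and fix $M>0$. Then there are only finitely many critical values in $(0,M)$ for coherent systems of type $(r,d,k)$, say $0<\alpha_1<\dots<\alpha_{i_M}<M$. Moreover, within each of the intervals $(0,\alpha_1)$, $(\alpha_i,\alpha_{i+1})$ and $(\alpha_{i_M},M)$, the property of $(\underline w,\alpha)$-stability of a coherent system of type $(r,d,k)$ is independent of $\alpha$.
   Context: $C$ is a connected reduced projective curve over $\mathbb{C}$ with only nodes, irreducible components $C_i$ smooth of genus $g_i\ge2$. A polarization $\underline{w}\in\mathbb{Q}^\gamma$ has $0<w_i<1$, $\sum w_i=1$. Depth one sheaf: coherent, pure of dimension one; $E_i=(E\otimes\mathcal{O}_{C_i})/\mathrm{torsion}$; $\mathrm{rk}_{\underline w}(E)=\sum w_i\mathrm{rk}(E_i)$; $\deg_{\underline w}(E)=\chi(E)-\mathrm{rk}_{\underline w}(E)\chi(\mathcal{O}_C)$; $\mu_{\underline w}=\deg_{\underline w}/\mathrm{rk}_{\underline w}$. Coherent system $(E,V)$: $E$ depth one, $V\subseteq H^0(E)$; type $(r,d,k)$: $\mathrm{rk}_{\underline w}E=r$, $\deg_{\underline w}E=d$, $\dim V=k$ ($r,d$ rational, $r>0$, $k\in\mathbb{N}$). Subsystem $(F,U)$: $F\subseteq E$, $U\subseteq V\cap H^0(F)$, proper if $\ne(0,0),(E,V)$. $\mu_{\underline w,\alpha}(E,V)=\mu_{\underline w}(E)+\alpha\dim V/\mathrm{rk}_{\underline w}E$;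 $(\underline w,\alpha)$-stable: $\mu_{\underline w,\alpha}(F,U)<\mu_{\underline w,\alpha}(E,V)$ for every proper subsystem. A value $\alpha>0$ is a critical value for coherent systems of type $(r,d,k)$ if it is numerically possible to have a proper subsystem $(F,W)$ of a coherent system $(E,V)$ of type $(r,d,k)$ with $\mu_{\underline w,\alpha}(F,W)=\mu_{\underline w,\alpha}(E,V)$ and $\mu_{\underline w}(F)\neq\mu_{\underline w}(E)$; i.e. $\alpha=\frac{rd'-r'd}{r'k-rk'}$ with $rk'\ne r'k$, where $k'\in\{0,\dots,k\}$, $r'=\sum_iw_ir_i'$ with integers $0\le r'_i\le r_i$ ($(r_i)$ a possible multirank), and $d'+r'\chi(\mathcal{O}_C)\in\mathbb{Z}$. *)

theory Defs
  imports Complex_Main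
begin

text \<open>Numerical data of a polarized nodal curve: gam = number of irreducible components
  (indexed by 0..gam-1), w = polarization, chi = chi(O_C) (an integer).\<close>

definition polarization :: "nat \<Rightarrow> (nat \<Rightarrow> real) \<Rightarrow> bool" where
  "polarization gam w \<longleftrightarrow> gam \<ge> 1 \<and>
     (\<forall>i<gam. w i \<in> \<rat> \<and> 0 < w i \<and> w i < 1) \<and> (\<Sum>i<gam. w i) = 1"

definition wrank :: "nat \<Rightarrow> (nat \<Rightarrow> real) \<Rightarrow> (nat \<Rightarrow> nat) \<Rightarrow> real" where
  "wrank gam w ri = (\<Sum>i<gam. w i * real (ri i))"

definition critical_value ::
  "nat \<Rightarrow> (nat \<Rightarrow> real) \<Rightarrow> int \<Rightarrow> real \<Rightarrow> real \<Rightarrow> nat \<Rightarrow> real \<Rightarrow> bool" where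
  "critical_value gam w chi r d k \<alpha> \<longleftrightarrow> \<alpha> > 0 \<and>
     (\<exists>ri ri' k' d'. wrank gam w ri = r \<and> (\<forall>i<gam. ri' i \<le> ri i) \<and> k' \<le> k \<and>
        d' + wrank gam w ri' * of_int chi \<in> \<int> \<and>
        r * real k' \<noteq> wrank gam w ri' * real k \<and>
        \<alpha> = (r * d' - wrank gam w ri' * d) / (wrank gam w ri' * real k - r * real k'))"

text \<open>Numerical constraints satisfied by the invariants (rk_w F, deg_w F, dim U) of a proper
  subsystem (F,U) of a coherent system whose underlying sheaf has multirank ri and dim V = k.\<close>
definition subsystem_type_ok ::
  "nat \<Rightarrow> (nat \<Rightarrow> real) \<Rightarrow> int \<Rightarrow> (nat \<Rightarrow> nat) \<Rightarrow> nat \<Rightarrow> real \<times> real \<times> nat \<Rightarrow> bool" where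
  "subsystem_type_ok gam w chi ri k t \<longleftrightarrow>
     (case t of (r', d', k') \<Rightarrow>
       (\<exists>ri'. (\<forall>i<gam. ri' i \<le> ri i) \<and> (\<exists>i<gam. 0 < ri' i) \<and> r' = wrank gam w ri' \<and>
              d' + r' * of_int chi \<in> \<int> \<and> k' \<le> k))"

text \<open>Abstract coherent system of type (r,d,k): a multirank ri of the underlying sheaf and the
  set S of numerical types of all its proper subsystems.\<close>
definition coh_sys_data ::
  "nat \<Rightarrow> (nat \<Rightarrow> real) \<Rightarrow> int \<Rightarrow> real \<Rightarrow> real \<Rightarrow> nat \<Rightarrow> (nat \<Rightarrow> nat) \<Rightarrow> (real \<times> real \<times> nat) set \<Rightarrow> bool" where
  "coh_sys_data gam w chi r d k ri S \<longleftrightarrow> wrank gam w ri = r \<and> d + r * of_int chi \<in> \<int> \<and>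
     (\<forall>t\<in>S. subsystem_type_ok gam w chi ri k t)"

definition mu_alpha :: "real \<Rightarrow> real \<Rightarrow> nat \<Rightarrow> real \<Rightarrow> real" where
  "mu_alpha r d k \<alpha> = d / r + \<alpha> * real k / r"

definition stable_alpha :: "real \<Rightarrow> real \<Rightarrow> nat \<Rightarrow> (real \<times> real \<times> nat) set \<Rightarrow> real \<Rightarrow> bool" where
  "stable_alpha r d k S \<alpha> \<longleftrightarrow> (\<forall>(r', d', k')\<in>S. mu_alpha r' d' k' \<alpha> < mu_alpha r d k \<alpha>)"

end

theory Submission
  imports Defs "HOL-Library.FuncSet"
begin

lemma finite_A:
  fixes r r' d M :: real and k k' :: nat and chi :: int
  assumes "r > 0"
  shows "finite {\<alpha>::real. 0 < \<alpha> \<and> \<alpha> < M \<and> r' * real k - r * real k' \<noteq> 0 \<and>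
      (\<exists>m::int. \<alpha> = (r * (of_int m - r' * of_int chi) - r' * d) / (r' * real k - r * real k'))}"
    (is "finite ?A")
proof (cases "r' * real k - r * real k' = 0")
  case True
  have "?A = {}" using True by auto
  then show ?thesis by (simp only: finite.emptyI)
next
  case False
  define D where "D = r' * real k - r * real k'"
  define c where "c = r * r' * of_int chi + r' * d"
  define B where "B = \<lceil>(M * \<bar>D\<bar> + \<bar>c\<bar>) / r\<rceil>"
  have "?A \<subseteq> (\<lambda>m. (r * (of_int m - r' * of_int chi) - r' * d) / D) ` {-B..B}"
  proof
    fix \<alpha> assume a: "\<alpha> \<in> ?A"
    then obtain m :: int where m: "\<alpha> = (r * (of_int m - r' * of_int chi) - r' * d) / D"
      and a0: "0 < \<alpha>" "\<alpha> < M" unfolding D_def by auto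
    have DD: "D \<noteq> 0" using False D_def by simp
    have "\<alpha> * D = r * (of_int m - r' * of_int chi) - r' * d" using m DD by simp
    hence "r * of_int m = \<alpha> * D + c" unfolding c_def by (simp add: algebra_simps)
    hence "\<bar>r * of_int m\<bar> \<le> \<bar>\<alpha> * D\<bar> + \<bar>c\<bar>" by (metis abs_triangle_ineq)
    also have "\<bar>\<alpha> * D\<bar> = \<alpha> * \<bar>D\<bar>" using a0 by (simp add: abs_mult)
    also have "\<alpha> * \<bar>D\<bar> + \<bar>c\<bar> \<le> M * \<bar>D\<bar> + \<bar>c\<bar>" using a0 by (simp add: mult_right_mono)
    finally have "r * \<bar>of_int m\<bar> \<le> M * \<bar>D\<bar> + \<bar>c\<bar>" using assms by (simp add: abs_mult)
    hence "\<bar>of_int m\<bar> \<le> (M * \<bar>D\<bar> + \<bar>c\<bar>) / r" using assms by (simp add: pos_le_divide_eq mult.commute)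
    hence "\<bar>of_int m :: real\<bar> \<le> of_int B" unfolding B_def
      by (meson le_of_int_ceiling order_trans)
    hence "\<bar>m\<bar> \<le> B" by linarith
    hence "m \<in> {-B..B}" by auto
    then show "\<alpha> \<in> (\<lambda>m. (r * (of_int m - r' * of_int chi) - r' * d) / D) ` {-B..B}"
      using m by blast
  qed
  then show ?thesis by (rule finite_subset) simp
qed

theorem lemma3p1:
  fixes gam :: nat and w :: "nat \<Rightarrow> real" and chi :: int
    and r d :: real and k :: nat and M :: real
  assumes "polarization gam w"
    and "r \<in> \<rat>" and "d \<in> \<rat>" and "r > 0"
    and "real k < r"
    and "M > 0"
  shows "finite {\<alpha>. critical_value gam w chi r d k \<alpha> \<and> \<alpha> < M} \<and>
    (\<forall>\<alpha>1 \<alpha>2. 0 < \<alpha>1 \<longrightarrow> \<alpha>1 \<le> \<alpha>2 \<longrightarrow> \<alpha>2 < M \<longrightarrow>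
       (\<forall>\<beta>\<in>{\<alpha>1..\<alpha>2}. \<not> critical_value gam w chi r d k \<beta>) \<longrightarrow>
       (\<forall>ri S. coh_sys_data gam w chi r d k ri S \<longrightarrow>
          (stable_alpha r d k S \<alpha>1 \<longleftrightarrow> stable_alpha r d k S \<alpha>2)))"
proof
  have wpos: "\<And>i. i < gam \<Longrightarrow> w i > 0" using assms(1) unfolding polarization_def by auto
  have wnn: "\<And>i. i < gam \<Longrightarrow> w i \<ge> 0" using wpos less_imp_le by blast
  define N where "N = nat \<lceil>\<Sum>i<gam. r / w i\<rceil>"
  define R where "R = (\<lambda>f. \<Sum>i<gam. w i * real (f i)) ` PiE {..<gam} (\<lambda>_. {0..N})"
  define A where "A = (\<lambda>r' k'. {\<alpha>::real. 0 < \<alpha> \<and> \<alpha> < M \<and> r' * real k - r * real k' \<noteq> 0 \<and>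
      (\<exists>m::int. \<alpha> = (r * (of_int m - r' * of_int chi) - r' * d) / (r' * real k - r * real k'))})"
  have finR: "finite R" unfolding R_def by (intro finite_imageI finite_PiE) auto
  have bound: "ri i \<le> N" if "wrank gam w ri = r" "i < gam" for ri i
  proof -
    have "w i * real (ri i) \<le> (\<Sum>j<gam. w j * real (ri j))"
      by (rule member_le_sum) (use that wpos in \<open>auto intro!: mult_nonneg_nonneg divide_nonneg_nonneg simp: wnn\<close>)
    hence "w i * real (ri i) \<le> r" using that unfolding wrank_def by simp
    hence "real (ri i) \<le> r / w i" using wpos[OF that(2)] by (simp add: field_simps)
    also have "\<dots> \<le> (\<Sum>j<gam. r / w j)"
      by (rule member_le_sum) (use that wpos assms(4) in \<open>auto intro!: mult_nonneg_nonneg divide_nonneg_nonneg simp: wnn\<close>)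
    also have "\<dots> \<le> real N" unfolding N_def by linarith
    finally show ?thesis by simp
  qed
  have "{\<alpha>. critical_value gam w chi r d k \<alpha> \<and> \<alpha> < M} \<subseteq> (\<Union>p\<in>R \<times> {..k}. A (fst p) (snd p))"
  proof
    fix \<alpha> assume "\<alpha> \<in> {\<alpha>. critical_value gam w chi r d k \<alpha> \<and> \<alpha> < M}"
    then obtain ri ri' k' d' where h: "\<alpha> > 0" "\<alpha> < M" "wrank gam w ri = r" "\<forall>i<gam. ri' i \<le> ri i"
      "k' \<le> k" "d' + wrank gam w ri' * of_int chi \<in> \<int>"
      "r * real k' \<noteq> wrank gam w ri' * real k"
      "\<alpha> = (r * d' - wrank gam w ri' * d) / (wrank gam w ri' * real k - r * real k')"
      unfolding critical_value_def by auto
    define r' where "r' = wrank gam w ri'"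
    obtain m where m: "d' + r' * of_int chi = of_int m" using h(6) unfolding r'_def
      by (metis Ints_cases)
    have "restrict ri' {..<gam} \<in> PiE {..<gam} (\<lambda>_. {0..N})"
      using h(4) bound[OF h(3)] by (force intro: le_trans)
    moreover have "r' = (\<Sum>i<gam. w i * real (restrict ri' {..<gam} i))"
      unfolding r'_def wrank_def by simp
    ultimately have "r' \<in> R" unfolding R_def by blast
    moreover have "\<alpha> \<in> A r' k'"
    proof -
      have de: "d' = of_int m - r' * of_int chi" using m by simp
      have "\<alpha> = (r * (of_int m - r' * of_int chi) - r' * d) / (r' * real k - r * real k')"
        using h(8) unfolding r'_def[symmetric] de .
      moreover have "r' * real k - r * real k' \<noteq> 0" using h(7) unfolding r'_def by simp
      ultimately show ?thesis unfolding A_def using h(1,2) by blast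
    qed
    ultimately show "\<alpha> \<in> (\<Union>p\<in>R \<times> {..k}. A (fst p) (snd p))" using h(5)
      by (intro UN_I[of "(r', k')"]) auto
  qed
  moreover have "finite (\<Union>p\<in>R \<times> {..k}. A (fst p) (snd p))"
  proof (rule finite_UN_I)
    show "finite (R \<times> {..k})" using finR by simp
    show "\<And>p. p \<in> R \<times> {..k} \<Longrightarrow> finite (A (fst p) (snd p))"
      unfolding A_def by (rule finite_A[OF assms(4)])
  qed
  ultimately show "finite {\<alpha>. critical_value gam w chi r d k \<alpha> \<and> \<alpha> < M}" by (rule finite_subset)
next
  show "\<forall>\<alpha>1 \<alpha>2. 0 < \<alpha>1 \<longrightarrow> \<alpha>1 \<le> \<alpha>2 \<longrightarrow> \<alpha>2 < M \<longrightarrow>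
       (\<forall>\<beta>\<in>{\<alpha>1..\<alpha>2}. \<not> critical_value gam w chi r d k \<beta>) \<longrightarrow>
       (\<forall>ri S. coh_sys_data gam w chi r d k ri S \<longrightarrow>
          (stable_alpha r d k S \<alpha>1 \<longleftrightarrow> stable_alpha r d k S \<alpha>2))"
  proof (intro allI impI)
    have wpos: "\<And>i. i < gam \<Longrightarrow> w i > 0" using assms(1) unfolding polarization_def by auto
    have wnn: "\<And>i. i < gam \<Longrightarrow> w i \<ge> 0" using wpos less_imp_le by blast
    fix \<alpha>1 \<alpha>2 ri S
    assume a: "0 < \<alpha>1" "\<alpha>1 \<le> \<alpha>2" "\<alpha>2 < M"
      and nc: "\<forall>\<beta>\<in>{\<alpha>1..\<alpha>2}. \<not> critical_value gam w chi r d k \<beta>"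
      and cs: "coh_sys_data gam w chi r d k ri S"
    have key: "mu_alpha r' d' k' \<alpha>1 < mu_alpha r d k \<alpha>1 \<longleftrightarrow> mu_alpha r' d' k' \<alpha>2 < mu_alpha r d k \<alpha>2"
      if t: "(r', d', k') \<in> S" for r' d' k'
    proof -
      obtain ri' where ri': "\<forall>i<gam. ri' i \<le> ri i" "\<exists>i<gam. 0 < ri' i" "r' = wrank gam w ri'"
        "d' + r' * of_int chi \<in> \<int>" "k' \<le> k"
      proof -
        have "subsystem_type_ok gam w chi ri k (r', d', k')" using cs t unfolding coh_sys_data_def by blast
        then show ?thesis using that unfolding subsystem_type_ok_def by auto
      qed
      have wr: "wrank gam w ri = r" using cs unfolding coh_sys_data_def by simp
      have rp: "r' > 0"
      proof -
        obtain i where i: "i < gam" "0 < ri' i" using ri'(2) by blast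
        have "w i * real (ri' i) \<le> (\<Sum>j<gam. w j * real (ri' j))"
          by (rule member_le_sum) (use i wpos in \<open>auto intro!: mult_nonneg_nonneg divide_nonneg_nonneg simp: wnn\<close>)
        moreover have "w i * real (ri' i) > 0" using i wpos by simp
        ultimately show ?thesis using ri'(3) unfolding wrank_def by simp
      qed
      define f where "f = (\<lambda>\<alpha>. (d / r - d' / r') + \<alpha> * (real k / r - real k' / r'))"
      have fe: "mu_alpha r' d' k' \<alpha> < mu_alpha r d k \<alpha> \<longleftrightarrow> f \<alpha> > 0" for \<alpha>
        unfolding f_def mu_alpha_def by (simp add: algebra_simps add_divide_distrib)
      show ?thesis
      proof (cases "r * real k' = r' * real k")
        case True
        hence "real k / r - real k' / r' = 0" using rp assms(4) by (simp add: field_simps)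
        thus ?thesis unfolding fe f_def by simp
      next
        case False
        define b where "b = real k / r - real k' / r'"
        define a0 where "a0 = d / r - d' / r'"
        have b0: "b \<noteq> 0" using False rp assms(4) unfolding b_def by (simp add: field_simps)
        define \<beta> where "\<beta> = - a0 / b"
        have fb: "f \<alpha> = b * (\<alpha> - \<beta>)" for \<alpha>
          unfolding f_def \<beta>_def a0_def[symmetric] b_def[symmetric] using b0 by (simp add: field_simps)
        have ae: "a0 = (d * r' - d' * r) / (r * r')" unfolding a0_def using rp assms(4)
          by (simp add: diff_divide_distrib)
        have be: "b = (real k * r' - real k' * r) / (r * r')" unfolding b_def using rp assms(4)
          by (simp add: diff_divide_distrib)
        have rr: "r * r' \<noteq> 0" using rp assms(4) by simp
        have "\<beta> = - (d * r' - d' * r) / (real k * r' - real k' * r)"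
          unfolding \<beta>_def ae be using rr by simp
        then have beq: "\<beta> = (r * d' - r' * d) / (r' * real k - r * real k')"
          by (simp add: algebra_simps minus_divide_left)
        show ?thesis
        proof (rule ccontr)
          assume "\<not> ?thesis"
          hence "(f \<alpha>1 > 0) \<noteq> (f \<alpha>2 > 0)" unfolding fe by simp
          hence "\<beta> \<in> {\<alpha>1..\<alpha>2}" unfolding fb using a(2) b0
            by (cases "b > 0") (auto simp: zero_less_mult_iff)
          moreover have "critical_value gam w chi r d k \<beta>"
            unfolding critical_value_def
          proof (intro conjI exI)
            show "\<beta> > 0" using \<open>\<beta> \<in> {\<alpha>1..\<alpha>2}\<close> a(1) by auto
            show "wrank gam w ri = r" by (rule wr)
            show "\<forall>i<gam. ri' i \<le> ri i" by (rule ri'(1))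
            show "k' \<le> k" by (rule ri'(5))
            show "d' + wrank gam w ri' * of_int chi \<in> \<int>" using ri' by simp
            show "r * real k' \<noteq> wrank gam w ri' * real k" using False ri' by simp
            show "\<beta> = (r * d' - wrank gam w ri' * d) / (wrank gam w ri' * real k - r * real k')"
              using beq ri' by simp
          qed
          ultimately show False using nc by blast
        qed
      qed
    qed
    show "stable_alpha r d k S \<alpha>1 \<longleftrightarrow> stable_alpha r d k S \<alpha>2"
      unfolding stable_alpha_def using key by auto
  qed
qed

end
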